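(* Let $k\ge1$, $n\ge2$, $\mathbf{u}\in\mathbb{S}^{k-1}$, $\alpha_1,\dots,\alpha_n>0$, $c_a,c_u\in\mathbb{R}\setminus\{0\}$, $\sigma\ge0$, and let $\mathbf{u}_1,\dots,\mathbf{u}_n$ be i.i.d. $\sim\mathcal{U}^k$. Define for $c\in\mathbb{R}$ $J(c)=c_a^2c_u^2\,\mathbb{E}\Big[\frac{\sum_{i,j=1}^n(\mathbf{u}_i-\mathbf{u})^\top(\mathbf{u}_j-\mathbf{u})e^{c_u^2c\,\mathbf{u}_i^\top\mathbf{u}+c_u^2c\,\mathbf{u}_j^\top\mathbf{u}}\alpha_i\alpha_j}{(\sum_{i=1}^n e^{c_u^2c\,\mathbf{u}_i^\top\mathbf{u}}\alpha_i)^2}\Big]+\sigma^2\,\mathbb{E}\Big[\frac{\sum_{i=1}^n e^{2c_u^2c\,\mathbf{u}_i^\top\mathbf{u}}\alpha_i^2}{(\sum_{i=1}^n e^{c_u^2c\,\mathbf{u}_i^\top\mathbf{u}}\alpha_i)^2}\Big]$. Then for every $\delta>0$, $0\notin\arg\min_{0\le c\le\delta}J(c)$.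
   Context: $\mathcal{U}^k$ is the uniform distribution on $\mathbb{S}^{k-1}$. *)

theory Defs
  imports "HOL-Probability.Probability"
begin

text \<open>Uniform distribution on the unit sphere of a Euclidean space (the normalized
  surface measure), realised as the cone measure: push forward the uniform
  distribution on the open unit ball under radial projection x \<mapsto> x / |x|.\<close>
definition unif_sphere :: "'a::euclidean_space measure" where
  "unif_sphere = distr (uniform_measure lborel (ball 0 1)) borel (\<lambda>x. sgn x)"

definition Jobj :: "nat \<Rightarrow> 'a::euclidean_space \<Rightarrow> (nat \<Rightarrow> real) \<Rightarrow> real \<Rightarrow> real \<Rightarrow> real \<Rightarrow> real \<Rightarrow> real" where
  "Jobj n u \<alpha> ca cu \<sigma> c =
     ca\<^sup>2 * cu\<^sup>2 *
       (\<integral>U. (\<Sum>i<n. \<Sum>j<n. ((U i - u) \<bullet> (U j - u)) *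
                 exp (cu\<^sup>2 * c * (U i \<bullet> u) + cu\<^sup>2 * c * (U j \<bullet> u)) * \<alpha> i * \<alpha> j)
             / (\<Sum>i<n. exp (cu\<^sup>2 * c * (U i \<bullet> u)) * \<alpha> i)\<^sup>2
          \<partial>(PiM {..<n} (\<lambda>_. unif_sphere)))
     + \<sigma>\<^sup>2 *
       (\<integral>U. (\<Sum>i<n. exp (2 * cu\<^sup>2 * c * (U i \<bullet> u)) * (\<alpha> i)\<^sup>2)
             / (\<Sum>i<n. exp (cu\<^sup>2 * c * (U i \<bullet> u)) * \<alpha> i)\<^sup>2
          \<partial>(PiM {..<n} (\<lambda>_. unif_sphere)))"

end

theory Submission
  imports Defs
begin


definition W :: "nat \<Rightarrow> (nat\<Rightarrow>real) \<Rightarrow> (nat\<Rightarrow>real) \<Rightarrow> real \<Rightarrow> real" where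
  "W n x a t = (\<Sum>l<n. exp (t * x l) * a l)"
definition P :: "nat \<Rightarrow> (nat\<Rightarrow>real) \<Rightarrow> (nat\<Rightarrow>real) \<Rightarrow> real \<Rightarrow> nat \<Rightarrow> real" where
  "P n x a t i = exp (t * x i) * a i / W n x a t"
definition mn :: "nat \<Rightarrow> (nat\<Rightarrow>real) \<Rightarrow> (nat\<Rightarrow>real) \<Rightarrow> real \<Rightarrow> real" where
  "mn n x a t = (\<Sum>l<n. P n x a t l * x l)"
definition Q :: "nat \<Rightarrow> (nat\<Rightarrow>nat\<Rightarrow>real) \<Rightarrow> (nat\<Rightarrow>real) \<Rightarrow> (nat\<Rightarrow>real) \<Rightarrow> real \<Rightarrow> real" where
  "Q n d x a t = (\<Sum>i<n. \<Sum>j<n. d i j * P n x a t i * P n x a t j)"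
definition Q' :: "nat \<Rightarrow> (nat\<Rightarrow>nat\<Rightarrow>real) \<Rightarrow> (nat\<Rightarrow>real) \<Rightarrow> (nat\<Rightarrow>real) \<Rightarrow> real \<Rightarrow> real" where
  "Q' n d x a t = (\<Sum>i<n. \<Sum>j<n. d i j * (P n x a t i * (x i - mn n x a t) * P n x a t j
      + P n x a t i * (P n x a t j * (x j - mn n x a t))))"

lemma W_pos: assumes "0 < n" "\<forall>i<n. a i > 0" shows "W n x a t > 0"
  unfolding W_def using assms by (intro sum_pos) auto

lemma P_nonneg: assumes "0 < n" "\<forall>i<n. a i > 0" "i < n" shows "P n x a t i \<ge> 0"
proof -
  have "a i > 0" using assms by auto
  then show ?thesis unfolding P_def using W_pos[OF assms(1,2), of x t] by simp
qed

lemma sum_P: assumes "0 < n" "\<forall>i<n. a i > 0" shows "(\<Sum>i<n. P n x a t i) = 1"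
  unfolding P_def using W_pos[OF assms(1,2), of x t]
  by (simp add: sum_divide_distrib[symmetric] W_def)

lemma mn_bound: assumes "0 < n" "\<forall>i<n. a i > 0" "\<forall>i<n. \<bar>x i\<bar> \<le> 1"
  shows "\<bar>mn n x a t\<bar> \<le> 1"
proof -
  have "\<bar>mn n x a t\<bar> \<le> (\<Sum>l<n. \<bar>P n x a t l * x l\<bar>)" unfolding mn_def by (rule sum_abs)
  also have "\<dots> \<le> (\<Sum>l<n. P n x a t l)"
  proof (rule sum_mono)
    fix l assume "l \<in> {..<n}"
    then show "\<bar>P n x a t l * x l\<bar> \<le> P n x a t l"
      using P_nonneg[OF assms(1,2), of l x t] assms(3)
      by (simp add: abs_mult mult_left_le)
  qed
  finally show ?thesis using sum_P[OF assms(1,2)] by simp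
qed

lemma deriv_W: "((\<lambda>t. W n x a t) has_real_derivative (\<Sum>l<n. x l * exp (t * x l) * a l)) (at t)"
  unfolding W_def
  by (auto intro!: derivative_eq_intros simp: mult_ac)

lemma deriv_P: assumes "0 < n" "\<forall>i<n. a i > 0"
  shows "((\<lambda>t. P n x a t i) has_real_derivative (P n x a t i * (x i - mn n x a t))) (at t)"
proof -
  have Wp: "W n x a t \<noteq> 0" using W_pos[OF assms, of x t] by simp
  have "((\<lambda>t. exp (t * x i) * a i / W n x a t) has_real_derivative
      ((x i * exp (t * x i) * a i) * W n x a t - exp (t * x i) * a i * (\<Sum>l<n. x l * exp (t * x l) * a l)) / (W n x a t * W n x a t)) (at t)"
    by (rule DERIV_divide[OF _ deriv_W Wp]) (rule derivative_eq_intros refl | simp)+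
  moreover have "((x i * exp (t * x i) * a i) * W n x a t - exp (t * x i) * a i * (\<Sum>l<n. x l * exp (t * x l) * a l)) / (W n x a t * W n x a t)
     = P n x a t i * (x i - mn n x a t)"
    unfolding P_def mn_def using Wp
    by (simp add: field_simps sum_divide_distrib[symmetric] sum_distrib_left mult_ac)
  ultimately show ?thesis unfolding P_def by simp
qed

lemma deriv_Q: assumes "0 < n" "\<forall>i<n. a i > 0"
  shows "((\<lambda>t. Q n d x a t) has_real_derivative Q' n d x a t) (at t)"
  unfolding Q_def Q'_def
  by (auto intro!: DERIV_sum derivative_eq_intros deriv_P[OF assms] simp: algebra_simps)

lemma Q_bound: assumes "0 < n" "\<forall>i<n. a i > 0" "\<forall>i<n. \<forall>j<n. \<bar>d i j\<bar> \<le> B"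
  shows "\<bar>Q n d x a t\<bar> \<le> B"
proof -
  let ?P = "P n x a t"
  have "\<bar>Q n d x a t\<bar> \<le> (\<Sum>i<n. \<Sum>j<n. \<bar>d i j * ?P i * ?P j\<bar>)"
    unfolding Q_def by (rule order_trans[OF sum_abs sum_mono[OF sum_abs]])
  also have "\<dots> \<le> (\<Sum>i<n. \<Sum>j<n. B * ?P i * ?P j)"
  proof (intro sum_mono)
    fix i j assume "i \<in> {..<n}" "j \<in> {..<n}"
    then show "\<bar>d i j * ?P i * ?P j\<bar> \<le> B * ?P i * ?P j"
      using P_nonneg[OF assms(1,2), of i x t] P_nonneg[OF assms(1,2), of j x t] assms(3)
      by (simp add: abs_mult mult_right_mono)
  qed
  also have "\<dots> = B * (\<Sum>i<n. ?P i) * (\<Sum>j<n. ?P j)"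
    by (simp add: sum_distrib_left sum_distrib_right mult_ac)
  finally show ?thesis using sum_P[OF assms(1,2)] by simp
qed

lemma Q'_bound: assumes "0 < n" "\<forall>i<n. a i > 0" "\<forall>i<n. \<forall>j<n. \<bar>d i j\<bar> \<le> B"
   "\<forall>i<n. \<bar>x i\<bar> \<le> 1"
  shows "\<bar>Q' n d x a t\<bar> \<le> 4 * B"
proof -
  let ?P = "P n x a t" and ?m = "mn n x a t"
  have "\<bar>Q' n d x a t\<bar> \<le> (\<Sum>i<n. \<Sum>j<n. \<bar>d i j * (?P i * (x i - ?m) * ?P j + ?P i * (?P j * (x j - ?m)))\<bar>)"
    unfolding Q'_def by (rule order_trans[OF sum_abs sum_mono[OF sum_abs]])
  also have "\<dots> \<le> (\<Sum>i<n. \<Sum>j<n. (4 * B) * ?P i * ?P j)"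
  proof (intro sum_mono)
    fix i j assume ij: "i \<in> {..<n}" "j \<in> {..<n}"
    have pi: "?P i \<ge> 0" and pj: "?P j \<ge> 0"
      using P_nonneg[OF assms(1,2), of i x t] P_nonneg[OF assms(1,2), of j x t] ij by auto
    have m: "\<bar>?m\<bar> \<le> 1" by (rule mn_bound[OF assms(1,2,4)])
    have xi: "\<bar>x i - ?m\<bar> \<le> 2" "\<bar>x j - ?m\<bar> \<le> 2" using assms(4) ij m by auto
    have "\<bar>?P i * (x i - ?m) * ?P j + ?P i * (?P j * (x j - ?m))\<bar> \<le> ?P i * 2 * ?P j + ?P i * (?P j * 2)"
    proof -
      have "\<bar>?P i * (x i - ?m) * ?P j\<bar> \<le> ?P i * 2 * ?P j"
        using pi pj xi by (simp add: abs_mult mult_left_mono mult_right_mono)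
      moreover have "\<bar>?P i * (?P j * (x j - ?m))\<bar> \<le> ?P i * (?P j * 2)"
        using pi pj xi by (simp add: abs_mult mult_left_mono mult_right_mono)
      ultimately show ?thesis by (smt (verit))
    qed
    moreover have "\<bar>d i j\<bar> \<le> B" using assms(3) ij by auto
    ultimately have "\<bar>d i j\<bar> * \<bar>?P i * (x i - ?m) * ?P j + ?P i * (?P j * (x j - ?m))\<bar> \<le> B * (4 * ?P i * ?P j)"
      using pi pj by (intro mult_mono) (auto simp: algebra_simps)
    then show "\<bar>d i j * (?P i * (x i - ?m) * ?P j + ?P i * (?P j * (x j - ?m)))\<bar> \<le> (4 * B) * ?P i * ?P j"
      by (simp add: abs_mult mult_ac)
  qed
  also have "\<dots> = (4 * B) * (\<Sum>i<n. ?P i) * (\<Sum>j<n. ?P j)"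
    by (simp add: sum_distrib_left sum_distrib_right mult_ac)
  finally show ?thesis using sum_P[OF assms(1,2)] by simp
qed

lemma Q_lip: assumes "0 < n" "\<forall>i<n. a i > 0" "\<forall>i<n. \<forall>j<n. \<bar>d i j\<bar> \<le> B"
   "\<forall>i<n. \<bar>x i\<bar> \<le> 1" "0 < t"
  shows "\<bar>Q n d x a t - Q n d x a 0\<bar> \<le> 4 * B * t"
proof -
  obtain z where "Q n d x a t - Q n d x a 0 = (t - 0) * Q' n d x a z"
    using MVT2[OF assms(5) deriv_Q[OF assms(1,2)]] by blast
  moreover have "\<bar>Q' n d x a z\<bar> \<le> 4 * B" by (rule Q'_bound[OF assms(1-4)])
  ultimately show ?thesis using assms(5) by (simp add: abs_mult mult.commute)
qed

lemma Q_quot_lim: assumes "0 < n" "\<forall>i<n. a i > 0" "c \<longlonglongrightarrow> 0" "\<forall>k. c k \<noteq> 0"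
  shows "(\<lambda>k. (Q n d x a (s * c k) - Q n d x a 0) / c k) \<longlonglongrightarrow> s * Q' n d x a 0"
proof -
  have D: "((\<lambda>h. Q n d x a (s * h)) has_real_derivative (Q' n d x a (s * 0) * s)) (at 0)"
    by (rule DERIV_chain2[OF deriv_Q[OF assms(1,2)]]) (auto intro!: derivative_eq_intros)
  have L: "((\<lambda>h. (Q n d x a (s * (0 + h)) - Q n d x a (s * 0)) / h) \<longlongrightarrow> Q' n d x a (s * 0) * s) (at 0)"
    using DERIV_D[OF D] by simp
  have F: "filterlim c (at 0) sequentially"
    using assms(3,4) by (simp add: filterlim_at)
  show ?thesis using filterlim_compose[OF L F] by (simp add: mult.commute)
qed

lemma Q_form: assumes "0 < n" "\<forall>i<n. a i > 0"
  shows "Q n d x a (s * c) = (\<Sum>i<n. \<Sum>j<n. d i j * exp (s * c * x i + s * c * x j) * a i * a j) / (\<Sum>i<n. exp (s * c * x i) * a i)\<^sup>2"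
proof -
  let ?W = "W n x a (s * c)"
  have Wp: "?W \<noteq> 0" using W_pos[OF assms, of x "s*c"] by simp
  have "(\<Sum>i<n. \<Sum>j<n. d i j * exp (s * c * x i + s * c * x j) * a i * a j) / ?W\<^sup>2
      = (\<Sum>i<n. \<Sum>j<n. d i j * exp (s * c * x i + s * c * x j) * a i * a j / ?W\<^sup>2)"
    by (simp add: sum_divide_distrib)
  also have "\<dots> = Q n d x a (s * c)"
    unfolding Q_def P_def using Wp
    by (intro sum.cong refl) (simp add: exp_add power2_eq_square field_simps)
  finally show ?thesis by (simp add: W_def)
qed

lemma Q_form2: assumes "0 < n" "\<forall>i<n. a i > 0"
  shows "Q n (\<lambda>i j. if i = j then 1 else 0) x a (s * c) = (\<Sum>i<n. exp (2 * s * c * x i) * (a i)\<^sup>2) / (\<Sum>i<n. exp (s * c * x i) * a i)\<^sup>2"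
proof -
  let ?W = "W n x a (s * c)"
  have Wp: "?W \<noteq> 0" using W_pos[OF assms, of x "s*c"] by simp
  have "Q n (\<lambda>i j. if i = j then 1 else 0) x a (s * c) = (\<Sum>i<n. P n x a (s * c) i * P n x a (s * c) i)"
    unfolding Q_def by (simp add: if_distrib[of "\<lambda>z. z * _"] cong: if_cong)
  also have "\<dots> = (\<Sum>i<n. exp (2 * s * c * x i) * (a i)\<^sup>2 / ?W\<^sup>2)"
  proof (intro sum.cong refl)
    fix i
    have "exp (2 * s * c * x i) = exp (s * c * x i) * exp (s * c * x i)"
      by (simp add: exp_add[symmetric])
    then show "P n x a (s * c) i * P n x a (s * c) i = exp (2 * s * c * x i) * (a i)\<^sup>2 / ?W\<^sup>2"
      unfolding P_def by (simp add: power2_eq_square)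
  qed
  also have "\<dots> = (\<Sum>i<n. exp (2 * s * c * x i) * (a i)\<^sup>2) / ?W\<^sup>2"
    by (simp add: sum_divide_distrib)
  finally show ?thesis by (simp add: W_def)
qed

lemma P0: assumes "0 < n" "\<forall>i<n. a i > 0"
  shows "P n x a 0 i = a i / (\<Sum>l<n. a l)"
  unfolding P_def W_def by simp

lemma Q'0_form: assumes "0 < n" "\<forall>i<n. a i > 0"
  defines "q \<equiv> \<lambda>i. a i / (\<Sum>l<n. a l)"
  shows "Q' n d x a 0 = (\<Sum>i<n. \<Sum>j<n. q i * q j * (d i j * x i)) + (\<Sum>i<n. \<Sum>j<n. q i * q j * (d i j * x j))
     - 2 * (\<Sum>i<n. \<Sum>j<n. \<Sum>l<n. q i * q j * q l * (d i j * x l))"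
proof -
  have PP: "P n x a 0 = q" by (rule ext) (simp add: P0[OF assms(1,2)] q_def)
  have M: "mn n x a 0 = (\<Sum>l<n. q l * x l)" unfolding mn_def PP ..
  show ?thesis
    unfolding Q'_def PP M
    by (simp add: algebra_simps sum.distrib sum_subtractf sum_distrib_left sum_distrib_right)
qed



lemma ball_meas: "emeasure lborel (ball (0::'a::euclidean_space) 1) \<noteq> 0"
  "emeasure lborel (ball (0::'a::euclidean_space) 1) \<noteq> \<infinity>"
proof -
  have "unit_ball_vol (real DIM('a)) > 0" by (rule unit_ball_vol_pos) simp
  then show "emeasure lborel (ball (0::'a::euclidean_space) 1) \<noteq> 0"
    "emeasure lborel (ball (0::'a::euclidean_space) 1) \<noteq> \<infinity>"
  using emeasure_lborel_ball_finite[of "0::'a" 1] 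
  by (auto simp: emeasure_ball less_le)
qed

lemma prob_unif: "prob_space (unif_sphere :: 'a::euclidean_space measure)"
  unfolding unif_sphere_def
  by (intro prob_space.prob_space_distr prob_space_uniform_measure ball_meas) auto

lemma AE_unif_norm: "AE v in (unif_sphere :: 'a::euclidean_space measure). norm v \<le> 1"
  unfolding unif_sphere_def
  by (subst AE_distr_iff) (auto simp: norm_sgn)

lemma uniform_ball_sym: "distr (uniform_measure lborel (ball (0::'a::euclidean_space) 1)) borel uminus
   = uniform_measure lborel (ball 0 1)"
proof -
  have L: "distr lborel borel (uminus :: 'a \<Rightarrow> 'a) = lborel"
    using lborel_affine[of "-1" "0::'a"] by (simp add: density_1)
  show ?thesis
  proof (rule measure_eqI)
    fix A :: "'a set" assume A: "A \<in> sets (distr (uniform_measure lborel (ball 0 1)) borel uminus)"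
    then have Ab: "A \<in> sets borel" by simp
    have um: "(uminus::'a\<Rightarrow>'a) \<in> borel_measurable borel" by simp
    have pre: "uminus -` A \<in> sets borel" using measurable_sets[OF um Ab] by simp
    have "emeasure (distr (uniform_measure lborel (ball 0 1)) borel uminus) A
       = emeasure (uniform_measure lborel (ball (0::'a) 1)) (uminus -` A)"
      using Ab by (subst emeasure_distr) auto
    also have "\<dots> = emeasure lborel (ball 0 1 \<inter> uminus -` A) / emeasure lborel (ball (0::'a) 1)"
      using Ab pre by (subst emeasure_uniform_measure) auto
    also have "ball 0 1 \<inter> uminus -` A = uminus -` (ball (0::'a) 1 \<inter> A) \<inter> space lborel"
      by auto
    also have "emeasure lborel \<dots> = emeasure (distr lborel borel uminus) (ball (0::'a) 1 \<inter> A)"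
      using Ab by (subst emeasure_distr) auto
    also have "\<dots> = emeasure lborel (ball (0::'a) 1 \<inter> A)" by (simp add: L)
    also have "emeasure lborel (ball (0::'a) 1 \<inter> A) / emeasure lborel (ball (0::'a) 1) =
       emeasure (uniform_measure lborel (ball (0::'a) 1)) A"
      using Ab by (subst emeasure_uniform_measure) auto
    finally show "emeasure (distr (uniform_measure lborel (ball 0 1)) borel uminus) A =
       emeasure (uniform_measure lborel (ball (0::'a) 1)) A" .
  qed simp
qed

lemma unif_sym: "distr (unif_sphere :: 'a::euclidean_space measure) unif_sphere uminus = unif_sphere"
proof -
  let ?N = "uniform_measure lborel (ball (0::'a) 1)"
  have "distr (unif_sphere :: 'a measure) unif_sphere uminus = distr (distr ?N borel sgn) borel uminus"
    unfolding unif_sphere_def by (intro distr_cong) auto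
  also have "\<dots> = distr ?N borel (uminus \<circ> sgn)"
    by (subst distr_distr) auto
  also have "uminus \<circ> sgn = sgn \<circ> (uminus :: 'a \<Rightarrow> 'a)"
    by (auto simp: fun_eq_iff sgn_minus)
  also have "distr ?N borel (sgn \<circ> uminus) = distr (distr ?N borel uminus) borel sgn"
    by (subst distr_distr) auto
  also have "\<dots> = unif_sphere" unfolding unif_sphere_def uniform_ball_sym ..
  finally show ?thesis .
qed

lemma sets_unif[measurable_cong, simp]: "sets (unif_sphere :: 'a::euclidean_space measure) = sets borel"
  unfolding unif_sphere_def by simp

lemma space_unif[simp]: "space (unif_sphere :: 'a::euclidean_space measure) = UNIV"
  unfolding unif_sphere_def by simp

definition flip :: "nat \<Rightarrow> nat \<Rightarrow> (nat \<Rightarrow> 'a::euclidean_space) \<Rightarrow> (nat \<Rightarrow> 'a)" where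
  "flip n k U = (\<lambda>i\<in>{..<n}. if i = k then - U i else U i)"

lemma flip_meas[measurable]: "flip n k \<in> PiM {..<n} (\<lambda>_. unif_sphere) \<rightarrow>\<^sub>M PiM {..<n} (\<lambda>_. (unif_sphere :: 'a::euclidean_space measure))"
  unfolding flip_def by measurable

lemma flip_inv: "distr (PiM {..<n} (\<lambda>_. unif_sphere)) (PiM {..<n} (\<lambda>_. unif_sphere)) (flip n k)
   = PiM {..<n} (\<lambda>_. (unif_sphere :: 'a::euclidean_space measure))"
proof -
  let ?M = "unif_sphere :: 'a measure"
  let ?PM = "PiM {..<n} (\<lambda>_. ?M)"
  interpret product_prob_space "\<lambda>_. ?M"
    by (intro product_prob_spaceI prob_unif)
  show ?thesis
  proof (rule PiM_eqI)
    fix A assume A: "\<And>i. i \<in> {..<n} \<Longrightarrow> A i \<in> sets ?M"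
    have PA: "Pi\<^sub>E {..<n} A \<in> sets ?PM" using A by (intro sets_PiM_I_finite) auto
    have um: "(uminus::'a\<Rightarrow>'a) \<in> borel_measurable borel" by simp
    define A' where "A' = (\<lambda>i. if i = k then uminus -` A i else A i)"
    have A': "A' i \<in> sets ?M" if "i \<in> {..<n}" for i
      using A[OF that] measurable_sets[OF um, of "A i"] by (auto simp: A'_def)
    have "emeasure (distr ?PM ?PM (flip n k)) (Pi\<^sub>E {..<n} A) = emeasure ?PM (flip n k -` Pi\<^sub>E {..<n} A \<inter> space ?PM)"
      using PA by (intro emeasure_distr) auto
    also have "flip n k -` Pi\<^sub>E {..<n} A \<inter> space ?PM = Pi\<^sub>E {..<n} A'"
      by (auto simp: flip_def space_PiM PiE_def Pi_def extensional_def A'_def split: if_splits)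
    also have "emeasure ?PM (Pi\<^sub>E {..<n} A') = (\<Prod>i\<in>{..<n}. emeasure ?M (A' i))"
      using A' by (intro emeasure_PiM) auto
    also have "\<dots> = (\<Prod>i\<in>{..<n}. emeasure ?M (A i))"
    proof (intro prod.cong refl)
      fix i assume i: "i \<in> {..<n}"
      show "emeasure ?M (A' i) = emeasure ?M (A i)"
      proof (cases "i = k")
        case True
        have "emeasure ?M (A i) = emeasure (distr ?M ?M uminus) (A i)" by (simp add: unif_sym)
        also have "\<dots> = emeasure ?M (uminus -` A i \<inter> space ?M)"
          using A[OF i] by (intro emeasure_distr) auto
        finally show ?thesis using True by (simp add: A'_def)
      qed (simp add: A'_def)
    qed
    finally show "emeasure (distr ?PM ?PM (flip n k)) (Pi\<^sub>E {..<n} A) = (\<Prod>i\<in>{..<n}. emeasure ?M (A i))" .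
  qed auto
qed

lemma integral_odd_zero:
  fixes f :: "(nat \<Rightarrow> 'a::euclidean_space) \<Rightarrow> real"
  assumes f[measurable]: "f \<in> borel_measurable (PiM {..<n} (\<lambda>_. unif_sphere))"
  assumes odd: "\<And>U. U \<in> space (PiM {..<n} (\<lambda>_. (unif_sphere :: 'a measure))) \<Longrightarrow> f (flip n k U) = - f U"
  shows "(\<integral>U. f U \<partial>PiM {..<n} (\<lambda>_. unif_sphere)) = 0"
proof -
  let ?PM = "PiM {..<n} (\<lambda>_. (unif_sphere :: 'a measure))"
  have "(\<integral>U. f U \<partial>?PM) = (\<integral>U. f U \<partial>distr ?PM ?PM (flip n k))" by (simp add: flip_inv)
  also have "\<dots> = (\<integral>U. f (flip n k U) \<partial>?PM)" by (rule integral_distr) auto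
  also have "\<dots> = (\<integral>U. - f U \<partial>?PM)" by (rule Bochner_Integration.integral_cong[OF refl]) (auto simp: odd)
  finally show ?thesis by simp
qed

lemma integral_marginal:
  fixes h :: "'a::euclidean_space \<Rightarrow> real"
  assumes [measurable]: "h \<in> borel_measurable borel" and i: "i < n"
  shows "(\<integral>U. h (U i) \<partial>PiM {..<n} (\<lambda>_. unif_sphere)) = (\<integral>v. h v \<partial>(unif_sphere :: 'a measure))"
proof -
  let ?PM = "PiM {..<n} (\<lambda>_. (unif_sphere :: 'a measure))"
  have "(\<integral>v. h v \<partial>(unif_sphere :: 'a measure)) = (\<integral>v. h v \<partial>distr ?PM unif_sphere (\<lambda>U. U i))"
    using i by (subst distr_PiM_component) (auto simp: prob_unif)
  also have "\<dots> = (\<integral>U. h (U i) \<partial>?PM)"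
    using i by (intro integral_distr) auto
  finally show ?thesis ..
qed



lemma AE_PM_norm': "AE U in PiM {..<n::nat} (\<lambda>_. (unif_sphere::'a::euclidean_space measure)). \<forall>i\<in>{..<n}. norm (U i) \<le> 1"
  apply (rule eventually_ball_finite)
   apply simp
  apply (intro ballI AE_PiM_component[where P="\<lambda>v. norm v \<le> 1"])
  by (auto simp: AE_unif_norm prob_unif)

lemma AE_PM_norm: "AE U in PiM {..<n::nat} (\<lambda>_. (unif_sphere :: 'a::euclidean_space measure)). \<forall>i<n. norm (U i) \<le> 1"
  by (rule eventually_mono[OF AE_PM_norm'[of n]]) auto

lemma pt_bound:
  fixes u x :: "'a::euclidean_space"
  assumes u: "norm u = 1" and x: "x \<in> ball ((1/2) *\<^sub>R u) (1/4)"
  shows "(sgn x \<bullet> u)\<^sup>2 \<ge> 1/9"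
proof -
  define e where "e = x - (1/2) *\<^sub>R u"
  have e: "norm e < 1/4" using x by (simp add: e_def dist_norm norm_minus_commute)
  have xe: "x = (1/2) *\<^sub>R u + e" by (simp add: e_def)
  have "\<bar>e \<bullet> u\<bar> \<le> norm e * norm u" by (rule Cauchy_Schwarz_ineq2)
  then have eu: "\<bar>e \<bullet> u\<bar> < 1/4" using e u by simp
  have uu: "u \<bullet> u = 1" using u by (simp add: dot_square_norm)
  have xu: "x \<bullet> u \<ge> 1/4" using eu uu by (simp add: xe inner_add_left)
  have nx: "norm x \<le> 3/4"
  proof -
    have "norm x \<le> norm ((1/2) *\<^sub>R u) + norm e" unfolding xe by (rule norm_triangle_ineq)
    then show ?thesis using e u by simp
  qed
  have x0: "x \<noteq> 0" using xu by auto
  then have npos: "norm x > 0" by simp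
  have "sgn x \<bullet> u = (x \<bullet> u) / norm x" by (simp add: sgn_div_norm inner_scaleR_left field_simps)
  also have "\<dots> \<ge> (1/4) / (3/4)"
    using xu nx npos by (intro frac_le) auto
  finally have "sgn x \<bullet> u \<ge> 1/3" by simp
  then have "(1/3)\<^sup>2 \<le> (sgn x \<bullet> u)\<^sup>2" by (intro power_mono) auto
  then show ?thesis by (simp add: power2_eq_square)
qed

lemma m_pos:
  fixes u :: "'a::euclidean_space"
  assumes u: "norm u = 1"
  shows "(\<integral>v. (v \<bullet> u)\<^sup>2 \<partial>(unif_sphere :: 'a measure)) > 0"
proof -
  let ?N = "uniform_measure lborel (ball (0::'a) 1)"
  let ?B = "ball ((1/2) *\<^sub>R u) (1/4)"
  interpret N: prob_space ?N by (intro prob_space_uniform_measure ball_meas)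
  have bnd: "\<bar>sgn x \<bullet> u\<bar> \<le> 1" for x :: 'a
    using Cauchy_Schwarz_ineq2[of "sgn x" u] u by (simp add: norm_sgn split: if_splits)
  have "(\<integral>v. (v \<bullet> u)\<^sup>2 \<partial>(unif_sphere :: 'a measure)) = (\<integral>x. (sgn x \<bullet> u)\<^sup>2 \<partial>?N)"
    unfolding unif_sphere_def by (rule integral_distr) auto
  also have "\<dots> \<ge> (\<integral>x. (1/9::real) * indicator ?B x \<partial>?N)"
  proof (rule integral_mono)
    show "integrable ?N (\<lambda>x. (1/9::real) * indicator ?B x)"
    proof (rule N.integrable_const_bound[where B=1])
      show "AE x in ?N. norm ((1/9::real) * indicator ?B x) \<le> 1" by (rule AE_I2) (simp add: indicator_def)
      have "?B \<in> sets ?N" by simp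
      then show "(\<lambda>x. (1/9::real) * indicator ?B x) \<in> borel_measurable ?N"
        by (intro borel_measurable_times borel_measurable_const borel_measurable_indicator)
    qed
    show "integrable ?N (\<lambda>x. (sgn x \<bullet> u)\<^sup>2)"
    proof (intro N.integrable_const_bound[where B=1] AE_I2)
      fix x :: 'a
      have "\<bar>sgn x \<bullet> u\<bar>\<^sup>2 \<le> 1\<^sup>2" using bnd[of x] by (intro power_mono) auto
      then show "norm ((sgn x \<bullet> u)\<^sup>2) \<le> 1" by simp
    next show "(\<lambda>x. (sgn x \<bullet> u)\<^sup>2) \<in> borel_measurable ?N" by measurable qed
    fix x show "(1/9::real) * indicator ?B x \<le> (sgn x \<bullet> u)\<^sup>2"
      using pt_bound[OF u, of x] by (auto simp: indicator_def)
  qed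
  also have "(\<integral>x. (1/9::real) * indicator ?B x \<partial>?N) = (1/9) * measure ?N ?B" by (simp del: measure_uniform_measure)
  also have "measure ?N ?B = measure lborel (ball 0 1 \<inter> ?B) / measure lborel (ball (0::'a) 1)"
    using ball_meas by (rule measure_uniform_measure) simp
  also have "ball 0 1 \<inter> ?B = ?B"
  proof -
    have "?B \<subseteq> ball 0 1"
    proof
      fix x assume "x \<in> ?B"
      then have "norm (x - (1/2) *\<^sub>R u) < 1/4" by (simp add: dist_norm norm_minus_commute)
      moreover have "norm x \<le> norm ((1/2) *\<^sub>R u) + norm (x - (1/2) *\<^sub>R u)"
        by (metis add.commute diff_add_cancel norm_triangle_ineq)
      ultimately show "x \<in> ball 0 1" using u by simp
    qed
    then show ?thesis by blast
  qed
  finally have ge: "(\<integral>v. (v \<bullet> u)\<^sup>2 \<partial>(unif_sphere :: 'a measure)) \<ge> (1/9) * (measure lborel ?B / measure lborel (ball (0::'a) 1))" .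
  moreover have "measure lborel ?B > 0" "measure lborel (ball (0::'a) 1) > 0"
  proof -
    have "unit_ball_vol (real DIM('a)) > 0" by (rule unit_ball_vol_pos) simp
    then show "measure lborel ?B > 0" "measure lborel (ball (0::'a) 1) > 0"
      by (auto simp: measure_def emeasure_ball)
  qed
  ultimately have "(1/9::real) * (measure lborel ?B / measure lborel (ball (0::'a) 1)) > 0"
    by (intro mult_pos_pos divide_pos_pos) auto
  then show ?thesis using ge by linarith
qed


lemma prob_PM: "prob_space (PiM {..<n::nat} (\<lambda>_. (unif_sphere :: 'a::euclidean_space measure)))"
  by (intro prob_space_PiM prob_unif)

lemma integrable_PM:
  fixes f :: "(nat \<Rightarrow> 'a::euclidean_space) \<Rightarrow> real"
  assumes "f \<in> borel_measurable (PiM {..<n::nat} (\<lambda>_. (unif_sphere :: 'a measure)))"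
  assumes "\<And>U. \<forall>i<n. norm (U i) \<le> 1 \<Longrightarrow> \<bar>f U\<bar> \<le> B"
  shows "integrable (PiM {..<n::nat} (\<lambda>_. (unif_sphere :: 'a measure))) f"
proof -
  interpret prob_space "PiM {..<n::nat} (\<lambda>_. (unif_sphere :: 'a measure))" by (rule prob_PM)
  show ?thesis
    by (rule integrable_const_bound[where B=B]) (auto intro: eventually_mono[OF AE_PM_norm] assms)
qed

lemma comp_meas: assumes "i < (n::nat)"
  shows "(\<lambda>U. U i) \<in> borel_measurable (PiM {..<n} (\<lambda>_. (unif_sphere :: 'a::euclidean_space measure)))"
proof -
  have "(\<lambda>U. U i) \<in> measurable (PiM {..<n} (\<lambda>_. (unif_sphere :: 'a measure))) unif_sphere"
    using assms by (intro measurable_component_singleton) auto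
  then show ?thesis by (simp add: measurable_cong_sets[OF refl sets_unif])
qed

lemma flip_app: "i < n \<Longrightarrow> flip n k U i = (if i = k then - U i else U i)"
  by (simp add: flip_def)

lemma E1: assumes "k < (n::nat)"
  shows "(\<integral>U. U k \<bullet> (u::'a::euclidean_space) \<partial>PiM {..<n} (\<lambda>_. (unif_sphere :: 'a measure))) = 0"
proof (rule integral_odd_zero[where k=k])
  note [measurable] = comp_meas[OF assms(1)]
  show "(\<lambda>U. U k \<bullet> u) \<in> borel_measurable (PiM {..<n} (\<lambda>_. (unif_sphere :: 'a measure)))" by measurable
qed (simp add: flip_app assms)

lemma E2: assumes "i < n" "j < n" "k < (n::nat)"
  shows "(\<integral>U. (U i \<bullet> U j) * (U k \<bullet> (u::'a::euclidean_space)) \<partial>PiM {..<n} (\<lambda>_. (unif_sphere :: 'a measure))) = 0"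
proof (rule integral_odd_zero[where k="if i = j then k else if k \<noteq> i then i else j"])
  note [measurable] = comp_meas[OF assms(1)] comp_meas[OF assms(2)] comp_meas[OF assms(3)]
  show "(\<lambda>U. (U i \<bullet> U j) * (U k \<bullet> u)) \<in> borel_measurable (PiM {..<n} (\<lambda>_. (unif_sphere :: 'a measure)))" by measurable
qed (auto simp: flip_app assms)

lemma E3a: assumes "i < n" "k < (n::nat)" "i \<noteq> k"
  shows "(\<integral>U. (U i \<bullet> (u::'a::euclidean_space)) * (U k \<bullet> u) \<partial>PiM {..<n} (\<lambda>_. (unif_sphere :: 'a measure))) = 0"
proof (rule integral_odd_zero[where k=i])
  note [measurable] = comp_meas[OF assms(1)] comp_meas[OF assms(2)]
  show "(\<lambda>U. (U i \<bullet> u) * (U k \<bullet> u)) \<in> borel_measurable (PiM {..<n} (\<lambda>_. (unif_sphere :: 'a measure)))" by measurable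
qed (use assms in \<open>auto simp: flip_app\<close>)

lemma E3b: assumes "i < (n::nat)"
  shows "(\<integral>U. (U i \<bullet> (u::'a::euclidean_space)) * (U i \<bullet> u) \<partial>PiM {..<n} (\<lambda>_. (unif_sphere :: 'a measure)))
     = (\<integral>v. (v \<bullet> u)\<^sup>2 \<partial>(unif_sphere :: 'a measure))"
  using integral_marginal[of "\<lambda>v. (v \<bullet> u)\<^sup>2" i n] assms by (simp add: power2_eq_square)

lemma E3: assumes "i < n" "k < (n::nat)"
  shows "(\<integral>U. (U i \<bullet> (u::'a::euclidean_space)) * (U k \<bullet> u) \<partial>PiM {..<n} (\<lambda>_. (unif_sphere :: 'a measure)))
     = (if i = k then (\<integral>v. (v \<bullet> u)\<^sup>2 \<partial>(unif_sphere :: 'a measure)) else 0)"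
  using E3a[OF assms] E3b[OF assms(1)] by auto

lemma ip_le1: "norm (v::'a::euclidean_space) \<le> 1 \<Longrightarrow> norm w \<le> 1 \<Longrightarrow> \<bar>v \<bullet> w\<bar> \<le> 1"
  using Cauchy_Schwarz_ineq2[of v w] mult_mono[of "norm v" 1 "norm w" 1] by auto

lemma E4: assumes "i < n" "j < n" "l < (n::nat)" and u: "norm u = 1"
  shows "(\<integral>U. ((U i - u) \<bullet> (U j - u)) * (U l \<bullet> (u::'a::euclidean_space)) \<partial>PiM {..<n} (\<lambda>_. (unif_sphere :: 'a measure)))
     = - (if i = l then (\<integral>v. (v \<bullet> u)\<^sup>2 \<partial>(unif_sphere :: 'a measure)) else 0)
       - (if j = l then (\<integral>v. (v \<bullet> u)\<^sup>2 \<partial>(unif_sphere :: 'a measure)) else 0)"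
proof -
  let ?PM = "PiM {..<n} (\<lambda>_. (unif_sphere :: 'a measure))"
  note [measurable] = comp_meas[OF assms(1)] comp_meas[OF assms(2)] comp_meas[OF assms(3)]
  have int: "integrable ?PM f" if "f \<in> borel_measurable ?PM" "\<And>U. \<forall>i<n. norm (U i) \<le> 1 \<Longrightarrow> \<bar>f U\<bar> \<le> 1" for f :: "(nat \<Rightarrow> 'a) \<Rightarrow> real"
    by (rule integrable_PM[where B=1, OF that])
  have prod1: "\<bar>a * b\<bar> \<le> 1" if "\<bar>a\<bar> \<le> 1" "\<bar>b\<bar> \<le> (1::real)" for a b
    using that by (simp add: abs_mult mult_le_one)
  have I1: "integrable ?PM (\<lambda>U. (U i \<bullet> U j) * (U l \<bullet> u))"
    by (rule int, measurable) (intro prod1 ip_le1, auto simp: assms)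
  have I2: "integrable ?PM (\<lambda>U. (U i \<bullet> u) * (U l \<bullet> u))"
    by (rule int, measurable) (intro prod1 ip_le1, auto simp: assms)
  have I3: "integrable ?PM (\<lambda>U. (U j \<bullet> u) * (U l \<bullet> u))"
    by (rule int, measurable) (intro prod1 ip_le1, auto simp: assms)
  have I4: "integrable ?PM (\<lambda>U. (U l \<bullet> u))"
    by (rule int, measurable) (intro prod1 ip_le1, auto simp: assms)
  have uu: "u \<bullet> u = 1" using u by (simp add: dot_square_norm)
  have "(\<integral>U. ((U i - u) \<bullet> (U j - u)) * (U l \<bullet> u) \<partial>?PM) =
     (\<integral>U. ((U i \<bullet> U j) * (U l \<bullet> u) - (U i \<bullet> u) * (U l \<bullet> u)) - (U j \<bullet> u) * (U l \<bullet> u) + (U l \<bullet> u) \<partial>?PM)"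
    by (rule Bochner_Integration.integral_cong[OF refl])
       (simp add: inner_diff_left inner_diff_right uu algebra_simps, simp add: inner_commute)
  also have "\<dots> = ((\<integral>U. (U i \<bullet> U j) * (U l \<bullet> u) \<partial>?PM) - (\<integral>U. (U i \<bullet> u) * (U l \<bullet> u) \<partial>?PM))
      - (\<integral>U. (U j \<bullet> u) * (U l \<bullet> u) \<partial>?PM) + (\<integral>U. (U l \<bullet> u) \<partial>?PM)"
    using I1 I2 I3 I4 by (simp add: Bochner_Integration.integral_add Bochner_Integration.integral_diff del: integral_mult_right integral_mult_left)
  also have "\<dots> = - (if i = l then (\<integral>v. (v \<bullet> u)\<^sup>2 \<partial>(unif_sphere :: 'a measure)) else 0)
       - (if j = l then (\<integral>v. (v \<bullet> u)\<^sup>2 \<partial>(unif_sphere :: 'a measure)) else 0)"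
    using E2[OF assms(1-3), of u] E3[OF assms(1,3), of u] E3[OF assms(2,3), of u] E1[OF assms(3), of u] by simp
  finally show ?thesis .
qed



lemma sumq2: assumes "(n::nat) \<ge> 2" "\<forall>i<n. a i > (0::real)"
  shows "(\<Sum>i<n. (a i / (\<Sum>l<n. a l))\<^sup>2) < 1"
proof -
  let ?A = "\<Sum>l<n. a l"
  have Apos: "?A > 0" using assms by (intro sum_pos) (auto simp: lessThan_empty_iff)
  have lt: "a i < ?A" if i: "i < n" for i
  proof -
    define j where "j = (if i = 0 then 1 else 0::nat)"
    have j: "j < n" "j \<noteq> i" using assms(1) by (auto simp: j_def)
    have "(\<Sum>l\<in>{i,j}. a l) \<le> ?A"
      using i j assms(2) by (intro sum_mono2) auto
    then show ?thesis using j assms(2) i by auto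
  qed
  have "(\<Sum>i<n. (a i / ?A)\<^sup>2) < (\<Sum>i<n. a i / ?A)"
  proof (rule sum_strict_mono)
    fix i assume "i \<in> {..<n}"
    then have y: "0 < a i / ?A" "a i / ?A < 1" using lt[of i] assms(2) Apos by auto
    show "(a i / ?A)\<^sup>2 < a i / ?A"
      using mult_strict_left_mono[OF y(2) y(1)] by (simp only: power2_eq_square mult_1_right)
  qed (use assms in \<open>auto simp: lessThan_empty_iff\<close>)
  also have "\<dots> = 1" using Apos by (simp add: sum_divide_distrib[symmetric])
  finally show ?thesis .
qed

lemma int_sum3:
  fixes g :: "nat \<Rightarrow> nat \<Rightarrow> nat \<Rightarrow> 'b \<Rightarrow> real"
  assumes "\<And>i j l. i < n \<Longrightarrow> j < n \<Longrightarrow> l < n \<Longrightarrow> integrable M (g i j l)"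
  shows "(\<integral>U. (\<Sum>i<n. \<Sum>j<n. \<Sum>l<n. c i j l * g i j l U) \<partial>M) = (\<Sum>i<n. \<Sum>j<n. \<Sum>l<n. c i j l * (\<integral>U. g i j l U \<partial>M))"
proof -
  have I: "integrable M (\<lambda>U. c i j l * g i j l U)" if "i<n" "j<n" "l<n" for i j l
    using assms[OF that] by simp
  have "(\<integral>U. (\<Sum>i<n. \<Sum>j<n. \<Sum>l<n. c i j l * g i j l U) \<partial>M) = (\<Sum>i<n. \<integral>U. (\<Sum>j<n. \<Sum>l<n. c i j l * g i j l U) \<partial>M)"
    by (intro Bochner_Integration.integral_sum) (auto intro!: integrable_sum I)
  also have "\<dots> = (\<Sum>i<n. \<Sum>j<n. \<integral>U. (\<Sum>l<n. c i j l * g i j l U) \<partial>M)"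
    by (intro sum.cong refl Bochner_Integration.integral_sum) (auto intro!: integrable_sum I)
  also have "\<dots> = (\<Sum>i<n. \<Sum>j<n. \<Sum>l<n. \<integral>U. c i j l * g i j l U \<partial>M)"
    by (intro sum.cong refl Bochner_Integration.integral_sum integrable_sum I) auto
  finally show ?thesis by simp
qed

lemma int_sum2:
  fixes g :: "nat \<Rightarrow> nat \<Rightarrow> 'b \<Rightarrow> real"
  assumes "\<And>i j. i < n \<Longrightarrow> j < n \<Longrightarrow> integrable M (g i j)"
  shows "(\<integral>U. (\<Sum>i<n. \<Sum>j<n. c i j * g i j U) \<partial>M) = (\<Sum>i<n. \<Sum>j<n. c i j * (\<integral>U. g i j U \<partial>M))"
proof -
  have I: "integrable M (\<lambda>U. c i j * g i j U)" if "i<n" "j<n" for i j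
    using assms[OF that] by simp
  have "(\<integral>U. (\<Sum>i<n. \<Sum>j<n. c i j * g i j U) \<partial>M) = (\<Sum>i<n. \<integral>U. (\<Sum>j<n. c i j * g i j U) \<partial>M)"
    by (intro Bochner_Integration.integral_sum) (auto intro!: integrable_sum I)
  also have "\<dots> = (\<Sum>i<n. \<Sum>j<n. \<integral>U. c i j * g i j U \<partial>M)"
    by (intro sum.cong refl Bochner_Integration.integral_sum integrable_sum I) auto
  finally show ?thesis by simp
qed

lemma dct_Q:
  fixes D :: "(nat \<Rightarrow> 'a::euclidean_space) \<Rightarrow> nat \<Rightarrow> nat \<Rightarrow> real" and X :: "(nat \<Rightarrow> 'a) \<Rightarrow> nat \<Rightarrow> real"
  assumes n0: "0 < n" and apos: "\<forall>i<n. a i > 0"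
  and meas: "\<And>t. (\<lambda>U. Q n (D U) (X U) a t) \<in> borel_measurable (PiM {..<n} (\<lambda>_. (unif_sphere :: 'a measure)))"
  and measd: "(\<lambda>U. Q' n (D U) (X U) a 0) \<in> borel_measurable (PiM {..<n} (\<lambda>_. (unif_sphere :: 'a measure)))"
  and bnd: "\<And>U. \<forall>i<n. norm (U i) \<le> 1 \<Longrightarrow> (\<forall>i<n. \<forall>j<n. \<bar>D U i j\<bar> \<le> 4) \<and> (\<forall>i<n. \<bar>X U i\<bar> \<le> 1)"
  and c: "c \<longlonglongrightarrow> 0" "\<And>k. c k > 0" and s: "s > 0"
  shows "(\<lambda>k. ((\<integral>U. Q n (D U) (X U) a (s * c k) \<partial>PiM {..<n} (\<lambda>_. unif_sphere))
                - (\<integral>U. Q n (D U) (X U) a 0 \<partial>PiM {..<n} (\<lambda>_. unif_sphere))) / c k)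
         \<longlonglongrightarrow> (\<integral>U. s * Q' n (D U) (X U) a 0 \<partial>PiM {..<n} (\<lambda>_. unif_sphere))"
proof -
  let ?PM = "PiM {..<n} (\<lambda>_. (unif_sphere :: 'a measure))"
  interpret prob_space ?PM by (rule prob_PM)
  have intQ: "integrable ?PM (\<lambda>U. Q n (D U) (X U) a t)" for t
  proof (rule integrable_PM[where B=4, OF meas])
    fix U :: "nat \<Rightarrow> 'a" assume "\<forall>i<n. norm (U i) \<le> 1"
    then show "\<bar>Q n (D U) (X U) a t\<bar> \<le> 4" using bnd by (intro Q_bound[OF n0 apos]) auto
  qed
  have eq: "((\<integral>U. Q n (D U) (X U) a (s * c k) \<partial>?PM) - (\<integral>U. Q n (D U) (X U) a 0 \<partial>?PM)) / c k
     = (\<integral>U. (Q n (D U) (X U) a (s * c k) - Q n (D U) (X U) a 0) / c k \<partial>?PM)" for k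
    using intQ by (simp add: Bochner_Integration.integral_diff)
  have "(\<lambda>k. (\<integral>U. (Q n (D U) (X U) a (s * c k) - Q n (D U) (X U) a 0) / c k \<partial>?PM))
         \<longlonglongrightarrow> (\<integral>U. s * Q' n (D U) (X U) a 0 \<partial>?PM)"
  proof (rule integral_dominated_convergence[where w="\<lambda>_. 16 * s"])
    show "(\<lambda>U. s * Q' n (D U) (X U) a 0) \<in> borel_measurable ?PM" using measd by simp
    show "(\<lambda>U. (Q n (D U) (X U) a (s * c k) - Q n (D U) (X U) a 0) / c k) \<in> borel_measurable ?PM" for k
      using meas[of "s * c k"] meas[of 0] by simp
    show "integrable ?PM (\<lambda>_. 16 * s)" by simp
    show "AE U in ?PM. (\<lambda>k. (Q n (D U) (X U) a (s * c k) - Q n (D U) (X U) a 0) / c k) \<longlonglongrightarrow> s * Q' n (D U) (X U) a 0"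
    proof (rule AE_I2)
      fix U
      have "c k \<noteq> 0" for k using c(2)[of k] by simp
      then show "(\<lambda>k. (Q n (D U) (X U) a (s * c k) - Q n (D U) (X U) a 0) / c k) \<longlonglongrightarrow> s * Q' n (D U) (X U) a 0"
        using Q_quot_lim[OF n0 apos c(1)] by blast
    qed
    show "AE U in ?PM. norm ((Q n (D U) (X U) a (s * c k) - Q n (D U) (X U) a 0) / c k) \<le> 16 * s" for k
    proof (rule eventually_mono[OF AE_PM_norm])
      fix U :: "nat \<Rightarrow> 'a" assume "\<forall>i<n. norm (U i) \<le> 1"
      then have b: "\<forall>i<n. \<forall>j<n. \<bar>D U i j\<bar> \<le> 4" "\<forall>i<n. \<bar>X U i\<bar> \<le> 1" using bnd by auto
      have ck: "c k > 0" by (rule c(2))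
      have "\<bar>Q n (D U) (X U) a (s * c k) - Q n (D U) (X U) a 0\<bar> \<le> 4 * 4 * (s * c k)"
        using ck s by (intro Q_lip[OF n0 apos b]) auto
      then show "norm ((Q n (D U) (X U) a (s * c k) - Q n (D U) (X U) a 0) / c k) \<le> 16 * s"
        using ck by (simp add: abs_divide divide_le_eq)
    qed
  qed
  then show ?thesis unfolding eq .
qed



lemma alg1: assumes "(\<Sum>i<n. q i) = (1::real)"
  shows "(\<Sum>i<(n::nat). \<Sum>j<n. q i * q j * (- (if i = i then m else 0) - (if j = i then m else 0))) = - m - m * (\<Sum>i<n. (q i)\<^sup>2)"
proof -
  have pt: "q i * q j * (- (if i = i then m else 0) - (if j = i then m else 0)) = - m * q i * q j - (if j = i then m * (q i)\<^sup>2 else 0)" for i j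
    by (auto simp: power2_eq_square)
  have "(\<Sum>i<n. \<Sum>j<n. q i * q j * (- (if i = i then m else 0) - (if j = i then m else 0)))
     = (\<Sum>i<n. - m * q i * (\<Sum>j<n. q j) - m * (q i)\<^sup>2)"
    unfolding pt by (intro sum.cong refl) (simp add: sum_subtractf sum_distrib_left sum.delta sum.delta' sum_negf)
  also have "\<dots> = - m - m * (\<Sum>i<n. (q i)\<^sup>2)"
    using assms by (simp add: sum_subtractf sum_negf sum_distrib_left[symmetric] sum_distrib_right[symmetric])
  finally show ?thesis .
qed

lemma alg2: assumes "(\<Sum>i<n. q i) = (1::real)"
  shows "(\<Sum>i<(n::nat). \<Sum>j<n. q i * q j * (- (if i = j then m else 0) - (if j = j then m else 0))) = - m - m * (\<Sum>i<n. (q i)\<^sup>2)"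
proof -
  have pt: "q i * q j * (- (if i = j then m else 0) - (if j = j then m else 0)) = - m * q i * q j - (if j = i then m * (q i)\<^sup>2 else 0)" for i j
    by (auto simp: power2_eq_square)
  have "(\<Sum>i<n. \<Sum>j<n. q i * q j * (- (if i = j then m else 0) - (if j = j then m else 0)))
     = (\<Sum>i<n. - m * q i * (\<Sum>j<n. q j) - m * (q i)\<^sup>2)"
    unfolding pt by (intro sum.cong refl) (simp add: sum_subtractf sum_distrib_left sum.delta sum.delta' sum_negf)
  also have "\<dots> = - m - m * (\<Sum>i<n. (q i)\<^sup>2)"
    using assms by (simp add: sum_subtractf sum_negf sum_distrib_left[symmetric] sum_distrib_right[symmetric])
  finally show ?thesis .
qed

lemma alg3: assumes "(\<Sum>i<n. q i) = (1::real)"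
  shows "(\<Sum>i<(n::nat). \<Sum>j<n. \<Sum>l<n. q i * q j * q l * (- (if i = l then m else 0) - (if j = l then m else 0))) = - 2 * m * (\<Sum>i<n. (q i)\<^sup>2)"
proof -
  have pt: "q i * q j * q l * (- (if i = l then m else 0) - (if j = l then m else 0))
     = - (if l = i then m * (q i)\<^sup>2 * q j else 0) - (if l = j then m * q i * (q j)\<^sup>2 else 0)" for i j l
    by (auto simp: power2_eq_square)
  have "(\<Sum>i<n. \<Sum>j<n. \<Sum>l<n. q i * q j * q l * (- (if i = l then m else 0) - (if j = l then m else 0)))
     = (\<Sum>i<n. \<Sum>j<n. - m * (q i)\<^sup>2 * q j - m * q i * (q j)\<^sup>2)"
    unfolding pt by (intro sum.cong refl) (simp add: sum_subtractf sum.delta sum.delta' sum_negf)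
  also have "\<dots> = (\<Sum>i<n. - m * (q i)\<^sup>2 * (\<Sum>j<n. q j) - m * q i * (\<Sum>j<n. (q j)\<^sup>2))"
    by (intro sum.cong refl) (simp add: sum_subtractf sum_distrib_left)
  also have "\<dots> = (\<Sum>i<n. - m * (q i)\<^sup>2 - (m * (\<Sum>j<n. (q j)\<^sup>2)) * q i)"
    using assms by (simp add: mult_ac)
  also have "\<dots> = - m * (\<Sum>i<n. (q i)\<^sup>2) - (m * (\<Sum>j<n. (q j)\<^sup>2)) * (\<Sum>i<n. q i)"
    by (simp add: sum_subtractf sum_negf sum_distrib_left sum_distrib_right)
  also have "\<dots> = - 2 * m * (\<Sum>i<n. (q i)\<^sup>2)"
    using assms by simp
  finally show ?thesis .
qed


lemma meas_W:
  assumes "\<And>i. i < n \<Longrightarrow> (\<lambda>U. X U i) \<in> borel_measurable M"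
  shows "(\<lambda>U. W n (X U) a t) \<in> borel_measurable M"
proof -
  have [measurable]: "(\<lambda>U. X U i) \<in> borel_measurable M" if "i \<in> {..<n}" for i using assms that by simp
  show ?thesis unfolding W_def by measurable
qed
lemma meas_P:
  assumes "\<And>i. i < n \<Longrightarrow> (\<lambda>U. X U i) \<in> borel_measurable M" "i < n"
  shows "(\<lambda>U. P n (X U) a t i) \<in> borel_measurable M"
proof -
  note [measurable] = meas_W[OF assms(1)] assms(1)[OF assms(2)]
  show ?thesis unfolding P_def by measurable
qed
lemma meas_mn:
  assumes "\<And>i. i < n \<Longrightarrow> (\<lambda>U. X U i) \<in> borel_measurable M"
  shows "(\<lambda>U. mn n (X U) a t) \<in> borel_measurable M"
proof -
  have [measurable]: "(\<lambda>U. X U i) \<in> borel_measurable M" "(\<lambda>U. P n (X U) a t i) \<in> borel_measurable M" if "i \<in> {..<n}" for i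
    using assms meas_P[OF assms] that by auto
  show ?thesis unfolding mn_def by measurable
qed
lemma meas_Q:
  assumes "\<And>i. i < n \<Longrightarrow> (\<lambda>U. X U i) \<in> borel_measurable M"
    "\<And>i j. i < n \<Longrightarrow> j < n \<Longrightarrow> (\<lambda>U. D U i j) \<in> borel_measurable M"
  shows "(\<lambda>U. Q n (D U) (X U) a t) \<in> borel_measurable M"
proof -
  have [measurable]: "(\<lambda>U. P n (X U) a t i) \<in> borel_measurable M" if "i \<in> {..<n}" for i
    using meas_P[OF assms(1)] that by auto
  have [measurable]: "(\<lambda>U. D U i j) \<in> borel_measurable M" if "i \<in> {..<n}" "j \<in> {..<n}" for i j
    using assms(2) that by auto
  show ?thesis unfolding Q_def by measurable
qed
lemma meas_Q':
  assumes "\<And>i. i < n \<Longrightarrow> (\<lambda>U. X U i) \<in> borel_measurable M"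
    "\<And>i j. i < n \<Longrightarrow> j < n \<Longrightarrow> (\<lambda>U. D U i j) \<in> borel_measurable M"
  shows "(\<lambda>U. Q' n (D U) (X U) a t) \<in> borel_measurable M"
proof -
  have [measurable]: "(\<lambda>U. P n (X U) a t i) \<in> borel_measurable M" "(\<lambda>U. X U i) \<in> borel_measurable M" if "i \<in> {..<n}" for i
    using meas_P[OF assms(1)] assms(1) that by auto
  have [measurable]: "(\<lambda>U. D U i j) \<in> borel_measurable M" if "i \<in> {..<n}" "j \<in> {..<n}" for i j
    using assms(2) that by auto
  note [measurable] = meas_mn[OF assms(1)]
  show ?thesis unfolding Q'_def by measurable
qed


theorem mainTheorem16:
  fixes n :: nat and u :: "'a::euclidean_space" and \<alpha> :: "nat \<Rightarrow> real"
    and ca cu \<sigma> \<delta> :: real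
  assumes "n \<ge> 2"
    and "u \<in> sphere 0 1"
    and "\<forall>i<n. \<alpha> i > 0"
    and "ca \<noteq> 0" and "cu \<noteq> 0"
    and "\<sigma> \<ge> 0"
    and "\<delta> > 0"
  shows "\<not> (\<forall>c\<in>{0..\<delta>}. Jobj n u \<alpha> ca cu \<sigma> 0 \<le> Jobj n u \<alpha> ca cu \<sigma> c)"
proof
  assume H: "\<forall>c\<in>{0..\<delta>}. Jobj n u \<alpha> ca cu \<sigma> 0 \<le> Jobj n u \<alpha> ca cu \<sigma> c"
  let ?M = "unif_sphere :: 'a measure"
  let ?PM = "PiM {..<n} (\<lambda>_. ?M)"
  have n0: "0 < n" using assms by simp
  have apos: "\<forall>i<n. \<alpha> i > 0" using assms by simp
  have u1: "norm u = 1" using assms(2) by simp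
  define s where "s = cu\<^sup>2"
  have s0: "s > 0" using assms by (simp add: s_def)
  define D1 :: "(nat \<Rightarrow> 'a) \<Rightarrow> nat \<Rightarrow> nat \<Rightarrow> real" where "D1 = (\<lambda>U i j. (U i - u) \<bullet> (U j - u))"
  define DD :: "(nat \<Rightarrow> 'a) \<Rightarrow> nat \<Rightarrow> nat \<Rightarrow> real" where "DD = (\<lambda>U i j. if i = j then 1 else 0)"
  define X :: "(nat \<Rightarrow> 'a) \<Rightarrow> nat \<Rightarrow> real" where "X = (\<lambda>U i. U i \<bullet> u)"
  define I1 where "I1 = (\<lambda>c. \<integral>U. Q n (D1 U) (X U) \<alpha> (s * c) \<partial>?PM)"
  define I2 where "I2 = (\<lambda>c. \<integral>U. Q n (DD U) (X U) \<alpha> (s * c) \<partial>?PM)"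
  have Jeq: "Jobj n u \<alpha> ca cu \<sigma> c = ca\<^sup>2 * cu\<^sup>2 * I1 c + \<sigma>\<^sup>2 * I2 c" for c
    unfolding Jobj_def I1_def I2_def D1_def DD_def X_def s_def
    by (simp only: Q_form2[OF n0 apos]) (simp add: Q_form[OF n0 apos])
  have mX: "(\<lambda>U. X U i) \<in> borel_measurable ?PM" if "i < n" for i
  proof -
    note [measurable] = comp_meas[OF that]
    show ?thesis unfolding X_def by measurable
  qed
  have mD1: "(\<lambda>U. D1 U i j) \<in> borel_measurable ?PM" if "i < n" "j < n" for i j
  proof -
    note [measurable] = comp_meas[OF that(1)] comp_meas[OF that(2)]
    show ?thesis unfolding D1_def by measurable
  qed
  have mDD: "(\<lambda>U. DD U i j) \<in> borel_measurable ?PM" for i j unfolding DD_def by simp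
  have mQ1: "(\<lambda>U. Q n (D1 U) (X U) \<alpha> t) \<in> borel_measurable ?PM" for t
    by (rule meas_Q[OF mX mD1])
  have mQ2: "(\<lambda>U. Q n (DD U) (X U) \<alpha> t) \<in> borel_measurable ?PM" for t
    by (rule meas_Q[OF mX mDD])
  have mQ'1: "(\<lambda>U. Q' n (D1 U) (X U) \<alpha> 0) \<in> borel_measurable ?PM"
    by (rule meas_Q'[OF mX mD1])
  have mQ'2: "(\<lambda>U. Q' n (DD U) (X U) \<alpha> 0) \<in> borel_measurable ?PM"
    by (rule meas_Q'[OF mX mDD])
  have n2: "norm (v - u) \<le> 2" if "norm v \<le> 1" for v :: 'a
    using norm_triangle_ineq4[of v u] that u1 by simp
  have bnd1: "(\<forall>i<n. \<forall>j<n. \<bar>D1 U i j\<bar> \<le> 4) \<and> (\<forall>i<n. \<bar>X U i\<bar> \<le> 1)" if "\<forall>i<n. norm (U i) \<le> 1" for U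
  proof (intro conjI allI impI)
    fix i j assume "i < n" "j < n"
    then have a: "norm (U i - u) \<le> 2" "norm (U j - u) \<le> 2" using n2 that by auto
    have "\<bar>D1 U i j\<bar> \<le> norm (U i - u) * norm (U j - u)" unfolding D1_def by (rule Cauchy_Schwarz_ineq2)
    also have "\<dots> \<le> 2 * 2" using a by (intro mult_mono) auto
    finally show "\<bar>D1 U i j\<bar> \<le> 4" by simp
  next
    fix i assume "i < n"
    then show "\<bar>X U i\<bar> \<le> 1" unfolding X_def using that u1 by (intro ip_le1) auto
  qed
  have bnd2: "(\<forall>i<n. \<forall>j<n. \<bar>DD U i j\<bar> \<le> 4) \<and> (\<forall>i<n. \<bar>X U i\<bar> \<le> 1)" if "\<forall>i<n. norm (U i) \<le> 1" for U
    using bnd1[OF that] by (simp add: DD_def)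
  define c where "c = (\<lambda>k. \<delta> / real (Suc k))"
  have cpos: "c k > 0" for k using assms(7) by (simp add: c_def)
  have cle: "c k \<le> \<delta>" for k using assms(7) by (simp add: c_def divide_le_eq)
  have clim: "c \<longlonglongrightarrow> 0" unfolding c_def by (rule LIMSEQ_Suc[OF lim_const_over_n])
  note lim1 = dct_Q[OF n0 apos mQ1 mQ'1 bnd1 clim cpos s0]
  note lim2 = dct_Q[OF n0 apos mQ2 mQ'2 bnd2 clim cpos s0]
  define q where "q = (\<lambda>i. \<alpha> i / (\<Sum>l<n. \<alpha> l))"
  have sq: "(\<Sum>i<n. q i) = 1"
  proof -
    have "(\<Sum>l<n. \<alpha> l) > 0" using apos n0 by (intro sum_pos) (auto simp: lessThan_empty_iff)
    then show ?thesis by (simp add: q_def sum_divide_distrib[symmetric])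
  qed
  define m where "m = (\<integral>v. (v \<bullet> u)\<^sup>2 \<partial>?M)"
  have mpos: "m > 0" unfolding m_def by (rule m_pos[OF u1])
  have S: "(\<Sum>i<n. (q i)\<^sup>2) < 1" unfolding q_def by (rule sumq2[OF assms(1) apos])
  have intg: "integrable ?PM (\<lambda>U. D U i j * X U l)"
    if "i < n" "j < n" "l < n" and bD: "\<And>U. \<forall>i<n. norm (U i) \<le> 1 \<Longrightarrow> (\<forall>i<n. \<forall>j<n. \<bar>D U i j\<bar> \<le> 4) \<and> (\<forall>i<n. \<bar>X U i\<bar> \<le> 1)"
      and mD: "(\<lambda>U. D U i j) \<in> borel_measurable ?PM" for D i j l
  proof (rule integrable_PM[where B=4])
    note [measurable] = comp_meas[OF that(3)]
    have mX: "(\<lambda>U. X U l) \<in> borel_measurable ?PM" unfolding X_def by measurable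
    show "(\<lambda>U. D U i j * X U l) \<in> borel_measurable ?PM" by (rule borel_measurable_times[OF mD mX])
    fix U :: "nat \<Rightarrow> 'a" assume "\<forall>i<n. norm (U i) \<le> 1"
    then have "\<bar>D U i j\<bar> \<le> 4" "\<bar>X U l\<bar> \<le> 1" using bD that(1-3) by auto
    then have "\<bar>D U i j\<bar> * \<bar>X U l\<bar> \<le> 4 * 1" by (intro mult_mono) auto
    then show "\<bar>D U i j * X U l\<bar> \<le> 4" by (simp add: abs_mult)
  qed
  have intg1: "integrable ?PM (\<lambda>U. D1 U i j * X U l)" if "i < n" "j < n" "l < n" for i j l
    by (rule intg[OF that bnd1 mD1[OF that(1,2)]])
  have intg2: "integrable ?PM (\<lambda>U. DD U i j * X U l)" if "i < n" "j < n" "l < n" for i j l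
    by (rule intg[OF that bnd2 mDD])
  have E4': "(\<integral>U. D1 U i j * X U l \<partial>?PM) = - (if i = l then m else 0) - (if j = l then m else 0)"
    if "i < n" "j < n" "l < n" for i j l
    using E4[OF that u1] unfolding D1_def X_def m_def by simp
  have EX: "(\<integral>U. DD U i j * X U l \<partial>?PM) = 0" if "l < n" for i j l
    unfolding DD_def X_def using E1[OF that, of u] by simp
  have QF: "Q' n d x \<alpha> 0 = (\<Sum>i<n. \<Sum>j<n. q i * q j * (d i j * x i)) + (\<Sum>i<n. \<Sum>j<n. q i * q j * (d i j * x j))
     - 2 * (\<Sum>i<n. \<Sum>j<n. \<Sum>l<n. q i * q j * q l * (d i j * x l))" for d x
    using Q'0_form[OF n0 apos, of d x] by (simp add: q_def)
  define S where "S = (\<Sum>i<n. (q i)\<^sup>2)"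
  have L1: "(\<integral>U. Q' n (D1 U) (X U) \<alpha> 0 \<partial>?PM) = - 2 * m * (1 - S)"
  proof -
    let ?A = "\<lambda>U. \<Sum>i<n. \<Sum>j<n. q i * q j * (D1 U i j * X U i)"
    let ?B = "\<lambda>U. \<Sum>i<n. \<Sum>j<n. q i * q j * (D1 U i j * X U j)"
    let ?C = "\<lambda>U. \<Sum>i<n. \<Sum>j<n. \<Sum>l<n. q i * q j * q l * (D1 U i j * X U l)"
    have iA: "integrable ?PM ?A" by (intro Bochner_Integration.integrable_sum Bochner_Integration.integrable_mult_right intg1) auto
    have iB: "integrable ?PM ?B" by (intro Bochner_Integration.integrable_sum Bochner_Integration.integrable_mult_right intg1) auto
    have iC: "integrable ?PM ?C" by (intro Bochner_Integration.integrable_sum Bochner_Integration.integrable_mult_right intg1) auto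
    have "(\<integral>U. Q' n (D1 U) (X U) \<alpha> 0 \<partial>?PM) = (\<integral>U. ?A U + ?B U - 2 * ?C U \<partial>?PM)"
      by (rule Bochner_Integration.integral_cong[OF refl]) (simp only: QF)
    also have "\<dots> = (\<integral>U. ?A U \<partial>?PM) + (\<integral>U. ?B U \<partial>?PM) - 2 * (\<integral>U. ?C U \<partial>?PM)"
      using iA iB iC by (simp add: Bochner_Integration.integral_add Bochner_Integration.integral_diff integrable_mult_right)
    also have "(\<integral>U. ?A U \<partial>?PM) = - m - m * S"
    proof -
      have "(\<integral>U. ?A U \<partial>?PM) = (\<Sum>i<n. \<Sum>j<n. q i * q j * (\<integral>U. D1 U i j * X U i \<partial>?PM))"
        by (rule int_sum2) (rule intg1, auto)
      also have "\<dots> = (\<Sum>i<n. \<Sum>j<n. q i * q j * (- (if i = i then m else 0) - (if j = i then m else 0)))"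
        by (intro sum.cong refl) (simp only: E4' lessThan_iff)
      finally show ?thesis unfolding S_def using alg1[OF sq] by simp
    qed
    also have "(\<integral>U. ?B U \<partial>?PM) = - m - m * S"
    proof -
      have "(\<integral>U. ?B U \<partial>?PM) = (\<Sum>i<n. \<Sum>j<n. q i * q j * (\<integral>U. D1 U i j * X U j \<partial>?PM))"
        by (rule int_sum2) (rule intg1, auto)
      also have "\<dots> = (\<Sum>i<n. \<Sum>j<n. q i * q j * (- (if i = j then m else 0) - (if j = j then m else 0)))"
        by (intro sum.cong refl) (simp only: E4' lessThan_iff)
      finally show ?thesis unfolding S_def using alg2[OF sq] by simp
    qed
    also have "(\<integral>U. ?C U \<partial>?PM) = - 2 * m * S"
    proof -
      have "(\<integral>U. ?C U \<partial>?PM) = (\<Sum>i<n. \<Sum>j<n. \<Sum>l<n. q i * q j * q l * (\<integral>U. D1 U i j * X U l \<partial>?PM))"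
        by (rule int_sum3) (rule intg1, auto)
      also have "\<dots> = (\<Sum>i<n. \<Sum>j<n. \<Sum>l<n. q i * q j * q l * (- (if i = l then m else 0) - (if j = l then m else 0)))"
        by (intro sum.cong refl) (simp only: E4' lessThan_iff)
      finally show ?thesis unfolding S_def using alg3[OF sq] by simp
    qed
    finally show ?thesis by (simp add: algebra_simps)
  qed
  have L2: "(\<integral>U. Q' n (DD U) (X U) \<alpha> 0 \<partial>?PM) = 0"
  proof -
    let ?A = "\<lambda>U. \<Sum>i<n. \<Sum>j<n. q i * q j * (DD U i j * X U i)"
    let ?B = "\<lambda>U. \<Sum>i<n. \<Sum>j<n. q i * q j * (DD U i j * X U j)"
    let ?C = "\<lambda>U. \<Sum>i<n. \<Sum>j<n. \<Sum>l<n. q i * q j * q l * (DD U i j * X U l)"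
    have iA: "integrable ?PM ?A" by (intro Bochner_Integration.integrable_sum Bochner_Integration.integrable_mult_right intg2) auto
    have iB: "integrable ?PM ?B" by (intro Bochner_Integration.integrable_sum Bochner_Integration.integrable_mult_right intg2) auto
    have iC: "integrable ?PM ?C" by (intro Bochner_Integration.integrable_sum Bochner_Integration.integrable_mult_right intg2) auto
    have "(\<integral>U. Q' n (DD U) (X U) \<alpha> 0 \<partial>?PM) = (\<integral>U. ?A U + ?B U - 2 * ?C U \<partial>?PM)"
      by (rule Bochner_Integration.integral_cong[OF refl]) (simp only: QF)
    also have "\<dots> = (\<integral>U. ?A U \<partial>?PM) + (\<integral>U. ?B U \<partial>?PM) - 2 * (\<integral>U. ?C U \<partial>?PM)"
      using iA iB iC by (simp add: Bochner_Integration.integral_add Bochner_Integration.integral_diff integrable_mult_right)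
    also have "(\<integral>U. ?A U \<partial>?PM) = 0"
    proof -
      have "(\<integral>U. ?A U \<partial>?PM) = (\<Sum>i<n. \<Sum>j<n. q i * q j * (\<integral>U. DD U i j * X U i \<partial>?PM))"
        by (rule int_sum2) (rule intg2, auto)
      also have "\<dots> = 0" by (simp add: EX)
      finally show ?thesis .
    qed
    also have "(\<integral>U. ?B U \<partial>?PM) = 0"
    proof -
      have "(\<integral>U. ?B U \<partial>?PM) = (\<Sum>i<n. \<Sum>j<n. q i * q j * (\<integral>U. DD U i j * X U j \<partial>?PM))"
        by (rule int_sum2) (rule intg2, auto)
      also have "\<dots> = 0" by (simp add: EX)
      finally show ?thesis .
    qed
    also have "(\<integral>U. ?C U \<partial>?PM) = 0"
    proof -
      have "(\<integral>U. ?C U \<partial>?PM) = (\<Sum>i<n. \<Sum>j<n. \<Sum>l<n. q i * q j * q l * (\<integral>U. DD U i j * X U l \<partial>?PM))"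
        by (rule int_sum3) (rule intg2, auto)
      also have "\<dots> = 0" by (simp add: EX)
      finally show ?thesis .
    qed
    finally show ?thesis by simp
  qed
  have lim1': "(\<lambda>k. (I1 (c k) - I1 0) / c k) \<longlonglongrightarrow> s * (- 2 * m * (1 - S))"
  proof -
    have e1: "(\<integral>U. s * Q' n (D1 U) (X U) \<alpha> 0 \<partial>?PM) = s * (- 2 * m * (1 - S))" by (simp only: integral_mult_right_zero L1)
    have eq: "(\<lambda>k. (I1 (c k) - I1 0) / c k) = (\<lambda>k. ((\<integral>U. Q n (D1 U) (X U) \<alpha> (s * c k) \<partial>?PM) - (\<integral>U. Q n (D1 U) (X U) \<alpha> 0 \<partial>?PM)) / c k)"
      unfolding I1_def by (simp only: mult_zero_right)
    show ?thesis unfolding eq e1[symmetric] by (rule lim1)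
  qed
  have lim2': "(\<lambda>k. (I2 (c k) - I2 0) / c k) \<longlonglongrightarrow> s * 0"
  proof -
    have e1: "(\<integral>U. s * Q' n (DD U) (X U) \<alpha> 0 \<partial>?PM) = s * 0" by (simp only: integral_mult_right_zero L2)
    have eq: "(\<lambda>k. (I2 (c k) - I2 0) / c k) = (\<lambda>k. ((\<integral>U. Q n (DD U) (X U) \<alpha> (s * c k) \<partial>?PM) - (\<integral>U. Q n (DD U) (X U) \<alpha> 0 \<partial>?PM)) / c k)"
      unfolding I2_def by (simp only: mult_zero_right)
    show ?thesis unfolding eq e1[symmetric] by (rule lim2)
  qed
  have JD: "(Jobj n u \<alpha> ca cu \<sigma> (c k) - Jobj n u \<alpha> ca cu \<sigma> 0) / c k
      = ca\<^sup>2 * cu\<^sup>2 * ((I1 (c k) - I1 0) / c k) + \<sigma>\<^sup>2 * ((I2 (c k) - I2 0) / c k)" for k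
  proof -
    have "Jobj n u \<alpha> ca cu \<sigma> (c k) - Jobj n u \<alpha> ca cu \<sigma> 0
        = ca\<^sup>2 * cu\<^sup>2 * (I1 (c k) - I1 0) + \<sigma>\<^sup>2 * (I2 (c k) - I2 0)"
      unfolding Jeq by (simp add: right_diff_distrib)
    then show ?thesis by (simp add: add_divide_distrib)
  qed
  have lim: "(\<lambda>k. (Jobj n u \<alpha> ca cu \<sigma> (c k) - Jobj n u \<alpha> ca cu \<sigma> 0) / c k)
      \<longlonglongrightarrow> ca\<^sup>2 * cu\<^sup>2 * (s * (- 2 * m * (1 - S))) + \<sigma>\<^sup>2 * (s * 0)"
    unfolding JD by (intro tendsto_add tendsto_mult_left lim1' lim2')
  have pos: "ca\<^sup>2 * cu\<^sup>2 * s * (2 * m * (1 - S)) > 0"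
  proof -
    have S1: "0 < 1 - S" using S by (simp add: S_def)
    have "ca\<^sup>2 > 0" "cu\<^sup>2 > 0" using assms(4,5) by auto
    then show ?thesis using s0 mpos S1 by (intro mult_pos_pos) auto
  qed
  have neg: "ca\<^sup>2 * cu\<^sup>2 * (s * (- 2 * m * (1 - S))) + \<sigma>\<^sup>2 * (s * 0) < 0"
    using pos by (simp add: algebra_simps)
  obtain N where N: "\<And>k. k \<ge> N \<Longrightarrow> (Jobj n u \<alpha> ca cu \<sigma> (c k) - Jobj n u \<alpha> ca cu \<sigma> 0) / c k < 0"
    using order_tendstoD(2)[OF lim neg] unfolding eventually_sequentially by blast
  have lt: "Jobj n u \<alpha> ca cu \<sigma> (c N) < Jobj n u \<alpha> ca cu \<sigma> 0"
    using N[of N] cpos[of N] by (simp add: divide_less_0_iff)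
  have "c N \<in> {0..\<delta>}" using cpos[of N] cle[of N] by auto
  moreover have "Jobj n u \<alpha> ca cu \<sigma> 0 \<le> Jobj n u \<alpha> ca cu \<sigma> (c N)" using H \<open>c N \<in> {0..\<delta>}\<close> by blast
  ultimately show False using lt by linarith
qed

end
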